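(* Let $k\ge2$ and let \[ A_\epsilon+\lambda E_\epsilon=\begin{bmatrix}\lambda E_{1,1} & A_{1,2} & & \\ & \ddots & \ddots & \\ & & \lambda E_{k-1,k-1} & A_{k-1,k}\end{bmatrix} \] be a bidiagonal pencil with $k-1$ block rows of sizes $s_1,\dots,s_{k-1}$ and $k$ block columns of sizes $t_1,\dots,t_k$, where $t_{i+1}=s_i$ for $i=1,\dots,k-1$, all unmarked blocks are zero, and \[ A_{i,i+1}\in\mathbb{C}^{s_i\times s_i},\qquad E_{i,i}=\begin{bmatrix}0&\hat E_{i,i}\end{bmatrix}\in\mathbb{C}^{s_i\times t_i},\qquad \hat E_{i,i}\in\mathbb{C}^{s_i\times s_i}, \] with both $A_{i,i+1}$ and $\hat E_{i,i}$ invertible and upper triangular. Let $n=\sum_{i=1}^k t_i$, let $r$ be the normal rank of the pencil, and put \[ Z_i=\begin{bmatrix}0&-A_{i,i+1}^{-1}\hat E_{i,i}\end{bmatrix}\in\mathbb{C}^{s_i\times t_i},\qquad N(\lambda):=\begin{bmatrix}I_{t_1}\\ Z_1\lambda\\ \vdots\\ Z_{k-1}\cdots Z_1\lambda^{k-1}\end{bmatrix}\in\mathbb{C}[\lambda]^{n\times(n-r)}. \] Then the columns of $N(\lambda)$ form a minimal polynomial basis for the right null space of $A_\epsilon+\lambda E_\epsilon$.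
   Context: The normal rank is the rank over $\mathbb{C}(\lambda)$. The right null space of a pencil $P(\lambda)$ is $\{x\in\mathbb{C}(\lambda)^n: P(\lambda)x(\lambda)=0\}$. A minimal polynomial basis of it is a polynomial matrix whose columns form a basis of this $\mathbb{C}(\lambda)$-space and whose sum of column degrees is minimal among all polynomial bases. *)

theory Defs
  imports "Jordan_Normal_Form.DL_Rank" "HOL-Computational_Algebra.Polynomial"
    "HOL-Computational_Algebra.Fraction_Field"
begin

definition blk_index :: "nat list \<Rightarrow> nat \<Rightarrow> nat" where
  "blk_index sizes a = (LEAST i. a < sum_list (take (Suc i) sizes))"

text \<open>Block matrix with block row sizes rs, block column sizes cs and blocks B i j
  (0-indexed); block B i j is meant to have size (rs!i) x (cs!j).\<close>
definition block_mat :: "nat list \<Rightarrow> nat list \<Rightarrow> (nat \<Rightarrow> nat \<Rightarrow> 'a mat) \<Rightarrow> 'a mat" where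
  "block_mat rs cs B = mat (sum_list rs) (sum_list cs)
     (\<lambda>(a,b). let i = blk_index rs a; j = blk_index cs b
              in B i j $$ (a - sum_list (take i rs), b - sum_list (take j cs)))"

text \<open>[0 B] with total number of columns t (zero columns padded on the left).\<close>
definition pad_left :: "nat \<Rightarrow> 'a::zero mat \<Rightarrow> 'a mat" where
  "pad_left t B = mat (dim_row B) t
     (\<lambda>(a,b). if b < t - dim_col B then 0 else B $$ (a, b - (t - dim_col B)))"

definition mat_inv :: "'a::semiring_1 mat \<Rightarrow> 'a mat" where
  "mat_inv A = (SOME B. inverts_mat A B \<and> inverts_mat B A)"

definition pencil :: "complex mat \<Rightarrow> complex mat \<Rightarrow> complex poly mat" where
  "pencil A E = mat (dim_row A) (dim_col A) (\<lambda>ij. [: A $$ ij, E $$ ij :])"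

definition to_rat_fun_mat :: "complex poly mat \<Rightarrow> complex poly fract mat" where
  "to_rat_fun_mat P = map_mat to_fract P"

definition right_null_space :: "complex poly mat \<Rightarrow> complex poly fract vec set" where
  "right_null_space P = {x \<in> carrier_vec (dim_col P).
      to_rat_fun_mat P *\<^sub>v x = 0\<^sub>v (dim_row P)}"

definition normal_rank :: "complex poly mat \<Rightarrow> nat" where
  "normal_rank P = vec_space.rank (dim_row P) (to_rat_fun_mat P)"

definition poly_basis_of_null_space :: "complex poly mat \<Rightarrow> complex poly mat \<Rightarrow> bool" where
  "poly_basis_of_null_space P N \<longleftrightarrow>
     dim_row N = dim_col P \<and>
     (\<forall>j < dim_col N. col (to_rat_fun_mat N) j \<in> right_null_space P) \<and>
     (\<forall>x \<in> right_null_space P. \<exists>!c. c \<in> carrier_vec (dim_col N) \<and> to_rat_fun_mat N *\<^sub>v c = x)"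

definition col_degree :: "complex poly mat \<Rightarrow> nat \<Rightarrow> nat" where
  "col_degree N j = Max (insert 0 {degree (N $$ (i,j)) | i. i < dim_row N})"

definition sum_col_degrees :: "complex poly mat \<Rightarrow> nat" where
  "sum_col_degrees N = (\<Sum>j<dim_col N. col_degree N j)"

definition minimal_poly_basis :: "complex poly mat \<Rightarrow> complex poly mat \<Rightarrow> bool" where
  "minimal_poly_basis P N \<longleftrightarrow> poly_basis_of_null_space P N \<and>
     (\<forall>M. poly_basis_of_null_space P M \<longrightarrow> sum_col_degrees N \<le> sum_col_degrees M)"

text \<open>Block column sizes t 0, ..., t (k-1) (= t_1..t_k); block row sizes
  s_i = t (i+1), i = 0..k-2. A i = A_{i+1,i+2}, Eh i = hat E_{i+1,i+1}.\<close>
definition A_eps :: "nat \<Rightarrow> (nat \<Rightarrow> nat) \<Rightarrow> (nat \<Rightarrow> complex mat) \<Rightarrow> complex mat" where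
  "A_eps k t A = block_mat (map t [1..<k]) (map t [0..<k])
     (\<lambda>i j. if j = Suc i then A i else 0\<^sub>m (t (Suc i)) (t j))"

definition E_eps :: "nat \<Rightarrow> (nat \<Rightarrow> nat) \<Rightarrow> (nat \<Rightarrow> complex mat) \<Rightarrow> complex mat" where
  "E_eps k t Eh = block_mat (map t [1..<k]) (map t [0..<k])
     (\<lambda>i j. if j = i then pad_left (t i) (Eh i) else 0\<^sub>m (t (Suc i)) (t j))"

definition Zmat :: "(nat \<Rightarrow> nat) \<Rightarrow> (nat \<Rightarrow> complex mat) \<Rightarrow> (nat \<Rightarrow> complex mat) \<Rightarrow> nat \<Rightarrow> complex mat" where
  "Zmat t A Eh i = pad_left (t i) (- (mat_inv (A i) * Eh i))"

text \<open>Zprod j = Z_j ... Z_1 (with Zprod 0 = identity of size t_1).\<close>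
fun Zprod :: "(nat \<Rightarrow> nat) \<Rightarrow> (nat \<Rightarrow> complex mat) \<Rightarrow> (nat \<Rightarrow> complex mat) \<Rightarrow> nat \<Rightarrow> complex mat" where
  "Zprod t A Eh 0 = 1\<^sub>m (t 0)"
| "Zprod t A Eh (Suc j) = Zmat t A Eh j * Zprod t A Eh j"

definition N_mat :: "nat \<Rightarrow> (nat \<Rightarrow> nat) \<Rightarrow> (nat \<Rightarrow> complex mat) \<Rightarrow> (nat \<Rightarrow> complex mat) \<Rightarrow> complex poly mat" where
  "N_mat k t A Eh = block_mat (map t [0..<k]) [t 0]
     (\<lambda>j _. map_mat (\<lambda>c. monom c j) (Zprod t A Eh j))"

end

theory Submission
  imports Defs "Jordan_Normal_Form.DL_Rank_Submatrix"
begin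


lemma (in vec_space) rank_le_nr: assumes "A \<in> carrier_mat n nc" shows "rank A \<le> n"
proof -
  have "set (cols A) \<subseteq> carrier_vec n" using assms cols_dim by blast
  then have "VectorSpace.subspace class_ring (span (set (cols A))) V" by (rule span_is_subspace)
  from subspace_dim[OF this fin_dim fin_dim_span_cols[OF assms]] show ?thesis unfolding rank_def dim_is_n by simp
qed

lemma (in vec_space) inj_cols_le:
  fixes B :: "'a mat"
  assumes B: "B \<in> carrier_mat n c"
    and inj: "\<And>a. a \<in> carrier_vec c \<Longrightarrow> B *\<^sub>v a = 0\<^sub>v n \<Longrightarrow> a = 0\<^sub>v c"
  shows "c \<le> n"
proof -
  have dist: "distinct (cols B)"
  proof (rule ccontr)
    assume "\<not> distinct (cols B)"
    then obtain i j where ij: "i \<noteq> j" "i < c" "j < c" "col B i = col B j"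
      using distinct_conv_nth B by (metis cols_length cols_nth carrier_matD(2))
    let ?a = "unit_vec c i - unit_vec c j :: 'a vec"
    have "B *\<^sub>v ?a = 0\<^sub>v n"
    proof (rule eq_vecI)
      fix x assume "x < dim_vec (0\<^sub>v n :: 'a vec)"
      then have x: "x < n" by simp
      have "B $$ (x,i) = B $$ (x,j)" using ij(4) x B ij(2,3)
        by (metis carrier_matD(1) col_def index_vec)
      moreover have "(\<Sum>ia = 0..<c. B $$ (x, ia) * ((if ia = i then 1 else 0) - (if ia = j then 1 else 0)))
        = (\<Sum>ia = 0..<c. (if ia = i then B $$ (x, ia) else 0) - (if ia = j then B $$ (x, ia) else 0))"
        by (rule sum.cong) auto
      ultimately show "(B *\<^sub>v ?a) $ x = 0\<^sub>v n $ x" using x B ij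
        by (simp add: scalar_prod_def sum_subtractf)
    qed (use B in simp)
    moreover have "?a \<noteq> 0\<^sub>v c"
    proof
      assume "?a = 0\<^sub>v c"
      then have "?a $ i = 0" using ij by simp
      then show False using ij by simp
    qed
    ultimately show False using inj[of ?a] by simp
  qed
  have "\<not> lin_dep (set (cols B))"
  proof
    assume "lin_dep (set (cols B))"
    then obtain v where "v \<in> carrier_vec c" "v \<noteq> 0\<^sub>v c" "B *\<^sub>v v = 0\<^sub>v n"
      using lin_depE[OF B _ dist] by blast
    then show False using inj by blast
  qed
  then have "rank B = c" using lin_indpt_full_rank[OF B dist] by blast
  then show ?thesis using rank_le_nr[OF B] by simp
qed



lemma sum_single:
  fixes f :: "nat \<Rightarrow> 'a::comm_monoid_add"
  assumes "j \<in> S" "finite S" "\<And>l. l \<in> S \<Longrightarrow> l \<noteq> j \<Longrightarrow> f l = 0"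
  shows "sum f S = f j"
proof -
  have "sum f S = f j + sum f (S - {j})" using assms by (simp add: sum.remove)
  also have "sum f (S - {j}) = 0" using assms by (intro sum.neutral) auto
  finally show ?thesis by simp
qed

lemma mat_inv_props:
  fixes A :: "'a::semiring_1 mat"
  assumes A: "A \<in> carrier_mat n n" and inv: "invertible_mat A"
  shows "mat_inv A \<in> carrier_mat n n" "A * mat_inv A = 1\<^sub>m n" "mat_inv A * A = 1\<^sub>m n"
proof -
  from inv obtain B where "inverts_mat A B \<and> inverts_mat B A" unfolding invertible_mat_def by blast
  then have "inverts_mat A (mat_inv A) \<and> inverts_mat (mat_inv A) A"
    unfolding mat_inv_def by (rule someI)
  then have 1: "A * mat_inv A = 1\<^sub>m n" and 2: "mat_inv A * A = 1\<^sub>m (dim_row (mat_inv A))"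
    using A unfolding inverts_mat_def by auto
  have c: "dim_col (mat_inv A) = n" using arg_cong[OF 1, of dim_col] by simp
  have r: "dim_row (mat_inv A) = n" using arg_cong[OF 2, of dim_col] A by simp
  show "mat_inv A \<in> carrier_mat n n" using c r by auto
  show "A * mat_inv A = 1\<^sub>m n" by fact
  show "mat_inv A * A = 1\<^sub>m n" using 2 r by simp
qed

lemma upper_tri_mult:
  fixes A B :: "'a::comm_ring_1 mat"
  assumes A: "A \<in> carrier_mat n n" and B: "B \<in> carrier_mat n n"
    and uA: "upper_triangular A" and uB: "upper_triangular B"
  shows "upper_triangular (A * B)" "\<And>i. i < n \<Longrightarrow> (A * B) $$ (i,i) = A $$ (i,i) * B $$ (i,i)"
proof -
  show "upper_triangular (A * B)"
  proof (rule upper_triangularI)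
    fix i j assume ji: "j < i" and i: "i < dim_row (A * B)"
    then have i': "i < n" using A by simp
    have "(A * B) $$ (i,j) = (\<Sum>l = 0..<n. A $$ (i,l) * B $$ (l,j))"
      using A B i' ji by (simp add: scalar_prod_def)
    also have "\<dots> = 0"
    proof (rule sum.neutral, intro ballI)
      fix l assume l: "l \<in> {0..<n}"
      show "A $$ (i,l) * B $$ (l,j) = 0"
      proof (cases "l < i")
        case True then show ?thesis using upper_triangularD[OF uA True] A i' by simp
      next
        case False then have "j < l" using ji by simp
        then show ?thesis using upper_triangularD[OF uB] B l by simp
      qed
    qed
    finally show "(A * B) $$ (i,j) = 0" .
  qed
  fix i assume i: "i < n"
  have "(A * B) $$ (i,i) = (\<Sum>l = 0..<n. A $$ (i,l) * B $$ (l,i))"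
    using A B i by (simp add: scalar_prod_def)
  also have "\<dots> = A $$ (i,i) * B $$ (i,i)"
  proof (rule sum_single)
    fix l assume l: "l \<in> {0..<n}" "l \<noteq> i"
    show "A $$ (i,l) * B $$ (l,i) = 0"
    proof (cases "l < i")
      case True then show ?thesis using upper_triangularD[OF uA True] A i by simp
    next
      case False then have "i < l" using l by simp
      then show ?thesis using upper_triangularD[OF uB] B l by simp
    qed
  qed (use i in auto)
  finally show "(A * B) $$ (i,i) = A $$ (i,i) * B $$ (i,i)" .
qed

lemma upper_tri_inv:
  fixes A :: "'a::field mat"
  assumes A: "A \<in> carrier_mat n n" and inv: "invertible_mat A" and uA: "upper_triangular A"
  shows "upper_triangular (mat_inv A)" "\<And>i. i < n \<Longrightarrow> mat_inv A $$ (i,i) \<noteq> 0"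
    "\<And>i. i < n \<Longrightarrow> A $$ (i,i) \<noteq> 0"
proof -
  note P = mat_inv_props[OF A inv]
  let ?B = "mat_inv A"
  have "det A * det ?B = 1" using det_mult[OF A P(1)] P(2) by simp
  then have "det A \<noteq> 0" by auto
  then have "0 \<notin> set (diag_mat A)" using upper_triangular_imp_det_eq_0_iff[OF A uA] by simp
  then show dA: "\<And>i. i < n \<Longrightarrow> A $$ (i,i) \<noteq> 0" using A unfolding diag_mat_def by auto
  have BA: "\<And>i j. i < n \<Longrightarrow> j < n \<Longrightarrow> (\<Sum>l = 0..<n. ?B $$ (i,l) * A $$ (l,j)) = (if i = j then 1 else 0)"
  proof -
    fix i j assume "i < n" "j < n"
    then have "(?B * A) $$ (i,j) = (\<Sum>l = 0..<n. ?B $$ (i,l) * A $$ (l,j))"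
      using A P(1) by (simp add: scalar_prod_def)
    then show "(\<Sum>l = 0..<n. ?B $$ (i,l) * A $$ (l,j)) = (if i = j then 1 else 0)"
      using P(3) \<open>i < n\<close> \<open>j < n\<close> by simp
  qed
  have low: "\<forall>i. j < i \<longrightarrow> i < n \<longrightarrow> ?B $$ (i,j) = 0" for j
  proof (induction j rule: less_induct)
    case (less j)
    show ?case
    proof (intro allI impI)
      fix i assume ji: "j < i" and i: "i < n"
      have "(\<Sum>l = 0..<n. ?B $$ (i,l) * A $$ (l,j)) = ?B $$ (i,j) * A $$ (j,j)"
      proof (rule sum_single)
        fix l assume l: "l \<in> {0..<n}" "l \<noteq> j"
        show "?B $$ (i,l) * A $$ (l,j) = 0"
        proof (cases "l < j")
          case True then show ?thesis using less ji i by auto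
        next
          case False then have "j < l" using l by simp
          then show ?thesis using upper_triangularD[OF uA] A l by simp
        qed
      qed (use ji i in auto)
      then have "?B $$ (i,j) * A $$ (j,j) = 0" using BA[of i j] ji i by simp
      then show "?B $$ (i,j) = 0" using dA[of j] ji i by simp
    qed
  qed
  show "upper_triangular ?B"
    using low P(1) by (intro upper_triangularI) auto
  fix i assume i: "i < n"
  have "(\<Sum>l = 0..<n. ?B $$ (i,l) * A $$ (l,i)) = ?B $$ (i,i) * A $$ (i,i)"
  proof (rule sum_single)
    fix l assume l: "l \<in> {0..<n}" "l \<noteq> i"
    show "?B $$ (i,l) * A $$ (l,i) = 0"
    proof (cases "l < i")
      case True then show ?thesis using low i by auto
    next
      case False then have "i < l" using l by simp
      then show ?thesis using upper_triangularD[OF uA] A l by simp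
    qed
  qed (use i in auto)
  then have "?B $$ (i,i) * A $$ (i,i) = 1" using BA[of i i] i by simp
  then show "?B $$ (i,i) \<noteq> 0" by auto
qed




lemma sum_list_take_mono:
  fixes xs :: "nat list"
  assumes "m \<le> n" shows "sum_list (take m xs) \<le> sum_list (take n xs)"
proof -
  have "take n xs = take m xs @ take (n - m) (drop m xs)"
    using assms by (metis le_add_diff_inverse take_add)
  then show ?thesis by (metis le_add1 sum_list_append)
qed

lemma blk_index_eq:
  assumes "sum_list (take i xs) \<le> a" "a < sum_list (take (Suc i) xs)"
  shows "blk_index xs a = i"
  unfolding blk_index_def
proof (rule Least_equality)
  show "a < sum_list (take (Suc i) xs)" by fact
  fix y assume y: "a < sum_list (take (Suc y) xs)"
  show "i \<le> y"
  proof (rule ccontr)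
    assume "\<not> i \<le> y"
    then have "Suc y \<le> i" by simp
    then have "sum_list (take (Suc y) xs) \<le> sum_list (take i xs)" by (rule sum_list_take_mono)
    then show False using y assms by simp
  qed
qed

lemma block_mat_index:
  assumes i: "i < length rs" and j: "j < length cs" and r: "r < rs ! i" and q: "q < cs ! j"
  shows "block_mat rs cs B $$ (sum_list (take i rs) + r, sum_list (take j cs) + q) = B i j $$ (r, q)"
proof -
  have ti: "sum_list (take (Suc i) rs) = sum_list (take i rs) + rs ! i"
    using i by (simp add: take_Suc_conv_app_nth)
  have tj: "sum_list (take (Suc j) cs) = sum_list (take j cs) + cs ! j"
    using j by (simp add: take_Suc_conv_app_nth)
  have bi: "blk_index rs (sum_list (take i rs) + r) = i" using r ti by (intro blk_index_eq) auto
  have bj: "blk_index cs (sum_list (take j cs) + q) = j" using q tj by (intro blk_index_eq) auto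
  have "sum_list (take (Suc i) rs) \<le> sum_list rs"
    by (metis sum_list_take_mono nat_le_linear take_all order_refl length_take min_def)
  then have ar: "sum_list (take i rs) + r < sum_list rs" using ti r by simp
  have "sum_list (take (Suc j) cs) \<le> sum_list cs"
    by (metis sum_list_take_mono nat_le_linear take_all order_refl length_take min_def)
  then have ac: "sum_list (take j cs) + q < sum_list cs" using tj q by simp
  show ?thesis unfolding block_mat_def using ar ac bi bj by (simp add: Let_def)
qed

lemma sum_list_take_map0: "j \<le> k \<Longrightarrow> sum_list (take j (map t [0..<k])) = (\<Sum>i<j. t i)"
proof -
  assume "j \<le> k"
  then have "take j (map t [0..<k]) = map t [0..<j]" by (simp add: take_map take_upt min_def)
  then have "sum_list (take j (map t [0..<k])) = sum_list (map t [0..<j])" by simp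
  also have "\<dots> = sum t {0..<j}" by (simp only: interv_sum_list_conv_sum_set_nat set_upt)
  finally show ?thesis by (simp add: atLeast0LessThan)
qed

lemma sum_list_take_map1: "j \<le> k - 1 \<Longrightarrow> sum_list (take j (map t [1..<k])) = (\<Sum>i<j. t (Suc i))"
proof -
  assume j: "j \<le> k - 1"
  have "take j (map t [1..<k]) = map t [1..<Suc j]" using j by (simp add: take_map take_upt min_def)
  then have "sum_list (take j (map t [1..<k])) = sum_list (map t [Suc 0..<Suc j])" by simp
  also have "\<dots> = sum t {Suc 0..<Suc j}" by (simp only: interv_sum_list_conv_sum_set_nat set_upt)
  also have "\<dots> = (\<Sum>i<j. t (Suc i))" by (simp only: sum.shift_bounds_Suc_ivl atLeast0LessThan)
  finally show ?thesis .
qed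

lemma decompose_blocks:
  fixes f :: "nat \<Rightarrow> nat"
  shows "a < (\<Sum>i<m. f i) \<Longrightarrow> \<exists>i<m. \<exists>r<f i. a = (\<Sum>i'<i. f i') + r"
proof (induction m)
  case 0 then show ?case by simp
next
  case (Suc m)
  show ?case
  proof (cases "a < (\<Sum>i<m. f i)")
    case True then show ?thesis using Suc.IH by (meson less_SucI)
  next
    case False
    then show ?thesis using Suc.prems by (intro exI[of _ m]) (auto intro: exI[of _ "a - (\<Sum>i<m. f i)"])
  qed
qed

lemma block_pos_less:
  fixes f :: "nat \<Rightarrow> nat"
  assumes "i < m" "r < f i" shows "(\<Sum>i'<i. f i') + r < (\<Sum>i<m. f i)"
proof -
  have "(\<Sum>i'<i. f i') + r < (\<Sum>i'<Suc i. f i')" using assms by simp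
  also have "\<dots> \<le> (\<Sum>i<m. f i)" using assms by (intro sum_mono2) auto
  finally show ?thesis .
qed

lemma block_pos_inj:
  fixes f :: "nat \<Rightarrow> nat"
  assumes "r < f i" "r' < f i'" "(\<Sum>l<i. f l) + r = (\<Sum>l<i'. f l) + r'"
  shows "i = i' \<and> r = r'"
proof -
  have *: False if "i < i'" "r < f i" "(\<Sum>l<i. f l) + r = (\<Sum>l<i'. f l) + r'" for i i' r r'
  proof -
    have "(\<Sum>l<i. f l) + r < (\<Sum>l<Suc i. f l)" using that by simp
    also have "\<dots> \<le> (\<Sum>l<i'. f l)" using that by (intro sum_mono2) auto
    finally show False using that by simp
  qed
  have "i = i'" using *[of i i' r r'] *[of i' i r' r] assms by (metis linorder_neqE_nat)
  then show ?thesis using assms by simp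
qed

lemma sum_blocks_reindex:
  fixes f :: "nat \<Rightarrow> nat" and g :: "nat \<Rightarrow> 'a::comm_monoid_add"
  shows "(\<Sum>b<(\<Sum>i<m. f i). g b) = (\<Sum>i<m. \<Sum>q<f i. g ((\<Sum>i'<i. f i') + q))"
proof (induction m)
  case 0 then show ?case by simp
next
  case (Suc m)
  have split: "\<And>S c. (\<Sum>b<S + c. g b) = (\<Sum>b<S. g b) + (\<Sum>q<c. g (S + q))"
  proof -
    fix S c show "(\<Sum>b<S + c. g b) = (\<Sum>b<S. g b) + (\<Sum>q<c. g (S + q))"
      by (induction c) (simp_all add: add.assoc)
  qed
  show ?case using split[of "\<Sum>i<m. f i" "f m"] Suc.IH by simp
qed




definition phi :: "complex \<Rightarrow> complex poly fract" where "phi c = to_fract [:c:]"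
definition LL :: "complex poly fract" where "LL = to_fract [:0, 1:]"

global_interpretation tf: inj_comm_ring_hom "to_fract :: complex poly \<Rightarrow> complex poly fract"
  by unfold_locales auto

global_interpretation phi: inj_comm_ring_hom phi
proof unfold_locales
  fix x y :: complex
  have "[:x+y:] = [:x:] + [:y:]" by simp
  then show "phi (x + y) = phi x + phi y" unfolding phi_def by (metis to_fract_add)
  have "[:x*y:] = [:x:] * [:y:]" by simp
  then show "phi (x * y) = phi x * phi y" unfolding phi_def by (metis to_fract_mult)
  show "phi 1 = 1" unfolding phi_def by (metis one_pCons to_fract_1)
  show "phi x = 0 \<Longrightarrow> x = 0" unfolding phi_def by simp
qed (simp add: phi_def)

lemma to_fract_pCons2: "to_fract [:a, e:] = phi a + LL * phi e"
proof -
  have "[:a, e:] = [:a:] + [:0, 1:] * [:e:]" by simp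
  then show ?thesis unfolding phi_def LL_def by (metis to_fract_add to_fract_mult)
qed

lemma to_fract_monom: "to_fract (monom c j) = phi c * LL ^ j"
proof -
  have "monom c j = [:c:] * [:0, 1:] ^ j" by (simp add: monom_altdef)
  then show ?thesis unfolding phi_def LL_def by (metis to_fract_mult tf.hom_power)
qed



locale bpc =
  fixes k :: nat and t :: "nat \<Rightarrow> nat" and A Eh :: "nat \<Rightarrow> complex mat"
  assumes k2: "k \<ge> 2"
    and tdec: "\<forall>i < k - 1. t (Suc i) \<le> t i"
    and Aass: "\<forall>i < k - 1. A i \<in> carrier_mat (t (Suc i)) (t (Suc i))
                       \<and> invertible_mat (A i) \<and> upper_triangular (A i)"
    and Eass: "\<forall>i < k - 1. Eh i \<in> carrier_mat (t (Suc i)) (t (Suc i))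
                       \<and> invertible_mat (Eh i) \<and> upper_triangular (Eh i)"
begin

definition "TT j = (\<Sum>i<j. t i)"
definition "RR i = (\<Sum>i'<i. t (Suc i'))"
definition "Ep i = pad_left (t i) (Eh i)"
definition "W i = mat_inv (A i) * Eh i"

lemma A_carr: "i < k - 1 \<Longrightarrow> A i \<in> carrier_mat (t (Suc i)) (t (Suc i))" using Aass by blast
lemma E_carr: "i < k - 1 \<Longrightarrow> Eh i \<in> carrier_mat (t (Suc i)) (t (Suc i))" using Eass by blast
lemma Ainv: "i < k - 1 \<Longrightarrow> mat_inv (A i) \<in> carrier_mat (t (Suc i)) (t (Suc i))"
  "i < k - 1 \<Longrightarrow> A i * mat_inv (A i) = 1\<^sub>m (t (Suc i))"
  "i < k - 1 \<Longrightarrow> mat_inv (A i) * A i = 1\<^sub>m (t (Suc i))"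
  using mat_inv_props[OF A_carr] Aass by blast+
lemma W_carr: "i < k - 1 \<Longrightarrow> W i \<in> carrier_mat (t (Suc i)) (t (Suc i))"
  unfolding W_def using Ainv(1)[of i] E_carr[of i] by (metis mult_carrier_mat)

lemma TT_Suc: "TT (Suc i) = t 0 + RR i"
  unfolding TT_def RR_def by (induction i) auto

lemma t_mono: "i \<le> j \<Longrightarrow> j < k \<Longrightarrow> t j \<le> t i"
proof (induction j)
  case 0 then show ?case by simp
next
  case (Suc j)
  show ?case
  proof (cases "i = Suc j")
    case False
    then have "t j \<le> t i" using Suc by simp
    moreover have "t (Suc j) \<le> t j" using tdec Suc.prems by auto
    ultimately show ?thesis by simp
  qed simp
qed

lemma rs_len: "length (map t [1..<k]) = k - 1" by simp
lemma cs_len: "length (map t [0..<k]) = k" by simp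
lemma rs_nth: "i < k - 1 \<Longrightarrow> map t [1..<k] ! i = t (Suc i)" by simp
lemma cs_nth: "j < k \<Longrightarrow> map t [0..<k] ! j = t j" by simp
lemma rs_take: "i \<le> k - 1 \<Longrightarrow> sum_list (take i (map t [1..<k])) = RR i"
  unfolding RR_def by (rule sum_list_take_map1)
lemma cs_take: "j \<le> k \<Longrightarrow> sum_list (take j (map t [0..<k])) = TT j"
  unfolding TT_def by (rule sum_list_take_map0)
lemma rs_sum: "sum_list (map t [1..<k]) = RR (k - 1)"
  using rs_take[of "k - 1"] by simp
lemma cs_sum: "sum_list (map t [0..<k]) = TT k"
  using cs_take[of k] by simp

lemma A_eps_carr: "A_eps k t A \<in> carrier_mat (RR (k - 1)) (TT k)"
  unfolding A_eps_def block_mat_def using rs_sum cs_sum by simp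
lemma E_eps_carr: "E_eps k t Eh \<in> carrier_mat (RR (k - 1)) (TT k)"
  unfolding E_eps_def block_mat_def using rs_sum cs_sum by simp
lemma N_carr: "N_mat k t A Eh \<in> carrier_mat (TT k) (t 0)"
  unfolding N_mat_def block_mat_def using cs_sum by simp

lemma A_eps_idx:
  assumes "i < k - 1" "r < t (Suc i)" "j < k" "q < t j"
  shows "A_eps k t A $$ (RR i + r, TT j + q) = (if j = Suc i then A i $$ (r,q) else 0)"
proof -
  have e: "A_eps k t A $$ (sum_list (take i (map t [1..<k])) + r, sum_list (take j (map t [0..<k])) + q)
     = (\<lambda>i j. if j = Suc i then A i else 0\<^sub>m (t (Suc i)) (t j)) i j $$ (r,q)"
    unfolding A_eps_def by (rule block_mat_index) (use assms in simp_all)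
  have rt: "sum_list (take i (map t [1..<k])) = RR i" using assms by (intro rs_take) simp
  have ct: "sum_list (take j (map t [0..<k])) = TT j" using assms by (intro cs_take) simp
  from e show ?thesis unfolding rt ct using assms by simp
qed

lemma Ep_carr: "i < k - 1 \<Longrightarrow> Ep i \<in> carrier_mat (t (Suc i)) (t i)"
  unfolding Ep_def pad_left_def using E_carr[of i] by auto

lemma E_eps_idx:
  assumes "i < k - 1" "r < t (Suc i)" "j < k" "q < t j"
  shows "E_eps k t Eh $$ (RR i + r, TT j + q) = (if j = i then Ep i $$ (r,q) else 0)"
proof -
  have e: "E_eps k t Eh $$ (sum_list (take i (map t [1..<k])) + r, sum_list (take j (map t [0..<k])) + q)
     = (\<lambda>i j. if j = i then pad_left (t i) (Eh i) else 0\<^sub>m (t (Suc i)) (t j)) i j $$ (r,q)"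
    unfolding E_eps_def by (rule block_mat_index) (use assms in simp_all)
  have rt: "sum_list (take i (map t [1..<k])) = RR i" using assms by (intro rs_take) simp
  have ct: "sum_list (take j (map t [0..<k])) = TT j" using assms by (intro cs_take) simp
  from e show ?thesis unfolding rt ct Ep_def using assms by simp
qed


lemma Ep_idx: "i < k - 1 \<Longrightarrow> r < t (Suc i) \<Longrightarrow> q < t i \<Longrightarrow>
  Ep i $$ (r,q) = (if q < t i - t (Suc i) then 0 else Eh i $$ (r, q - (t i - t (Suc i))))"
  unfolding Ep_def pad_left_def using E_carr[of i] by auto

lemma Z_carr: "i < k - 1 \<Longrightarrow> Zmat t A Eh i \<in> carrier_mat (t (Suc i)) (t i)"
  unfolding Zmat_def pad_left_def using W_carr[of i] by (auto simp: W_def[symmetric])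

lemma Z_idx: "i < k - 1 \<Longrightarrow> r < t (Suc i) \<Longrightarrow> q < t i \<Longrightarrow>
  Zmat t A Eh i $$ (r,q) = (if q < t i - t (Suc i) then 0 else - W i $$ (r, q - (t i - t (Suc i))))"
  unfolding Zmat_def pad_left_def using W_carr[of i] by (auto simp: W_def[symmetric])

lemma W_tri: assumes "i < k - 1"
  shows "upper_triangular (W i)" "\<And>r. r < t (Suc i) \<Longrightarrow> W i $$ (r,r) \<noteq> 0"
proof -
  have Ai: "A i \<in> carrier_mat (t (Suc i)) (t (Suc i))" "invertible_mat (A i)" "upper_triangular (A i)"
    using Aass assms by auto
  have Ei: "Eh i \<in> carrier_mat (t (Suc i)) (t (Suc i))" "invertible_mat (Eh i)" "upper_triangular (Eh i)"
    using Eass assms by auto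
  note ui = upper_tri_inv[OF Ai]
  note ue = upper_tri_inv[OF Ei]
  note um = upper_tri_mult[OF Ainv(1)[OF assms] Ei(1) ui(1) Ei(3)]
  show "upper_triangular (W i)" unfolding W_def by (rule um(1))
  fix r assume r: "r < t (Suc i)"
  show "W i $$ (r,r) \<noteq> 0" unfolding W_def um(2)[OF r] using ui(2)[OF r] ue(3)[OF r] by simp
qed

lemma Z_zero: "i < k - 1 \<Longrightarrow> r < t (Suc i) \<Longrightarrow> q < t i \<Longrightarrow> q < t i - t (Suc i) + r \<Longrightarrow>
  Zmat t A Eh i $$ (r,q) = 0"
  using Z_idx[of i r q] upper_triangularD[OF W_tri(1), of i "q - (t i - t (Suc i))" r] W_carr[of i]
  by (cases "q < t i - t (Suc i)") auto

lemma Z_diag: "i < k - 1 \<Longrightarrow> r < t (Suc i) \<Longrightarrow> Zmat t A Eh i $$ (r, t i - t (Suc i) + r) \<noteq> 0"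
proof -
  assume i: "i < k - 1" and r: "r < t (Suc i)"
  have "t (Suc i) \<le> t i" using tdec i by auto
  then show ?thesis using Z_idx[of i r "t i - t (Suc i) + r"] i r W_tri(2)[OF i r] by auto
qed

lemma U_carr: "j < k \<Longrightarrow> Zprod t A Eh j \<in> carrier_mat (t j) (t 0)"
proof (induction j)
  case 0 then show ?case by simp
next
  case (Suc j)
  then have "j < k - 1" by simp
  then show ?case using Suc Z_carr[of j] by (simp add: mult_carrier_mat)
qed

lemma U_zero: "j < k \<Longrightarrow> q < t j \<Longrightarrow> l < t 0 \<Longrightarrow> l + t j < t 0 + q \<Longrightarrow> Zprod t A Eh j $$ (q,l) = 0"
proof (induction j arbitrary: q l)
  case 0 then show ?case by simp
next
  case (Suc j)
  then have j: "j < k - 1" "j < k" by auto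
  have tt: "t (Suc j) \<le> t j" using tdec j by auto
  have "Zprod t A Eh (Suc j) $$ (q,l) = (\<Sum>s = 0..<t j. Zmat t A Eh j $$ (q,s) * Zprod t A Eh j $$ (s,l))"
    using Z_carr[OF j(1)] U_carr[OF j(2)] Suc.prems by (simp add: scalar_prod_def)
  also have "\<dots> = 0"
  proof (rule sum.neutral, intro ballI)
    fix s assume s: "s \<in> {0..<t j}"
    show "Zmat t A Eh j $$ (q,s) * Zprod t A Eh j $$ (s,l) = 0"
    proof (cases "s < t j - t (Suc j) + q")
      case True then show ?thesis using Z_zero[OF j(1)] Suc.prems s by simp
    next
      case False
      then have "l + t j < t 0 + s" using Suc.prems tt by simp
      then show ?thesis using Suc.IH[OF j(2)] Suc.prems s by simp
    qed
  qed
  finally show ?case .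
qed

lemma t_le0: "j < k \<Longrightarrow> t j \<le> t 0" using t_mono[of 0 j] by simp

lemma U_diag: "j < k \<Longrightarrow> q < t j \<Longrightarrow> Zprod t A Eh j $$ (q, t 0 - t j + q) \<noteq> 0"
proof (induction j arbitrary: q)
  case 0 then show ?case by simp
next
  case (Suc j)
  then have j: "j < k - 1" "j < k" by auto
  have tt: "t (Suc j) \<le> t j" using tdec j by auto
  have t0: "t j \<le> t 0" using t_le0 j by simp
  let ?l = "t 0 - t (Suc j) + q"
  let ?s = "t j - t (Suc j) + q"
  have l: "?l < t 0" using Suc.prems tt t0 by simp
  have "Zprod t A Eh (Suc j) $$ (q,?l) = (\<Sum>s = 0..<t j. Zmat t A Eh j $$ (q,s) * Zprod t A Eh j $$ (s,?l))"
    using Z_carr[OF j(1)] U_carr[OF j(2)] Suc.prems l by (simp add: scalar_prod_def)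
  also have "\<dots> = Zmat t A Eh j $$ (q,?s) * Zprod t A Eh j $$ (?s,?l)"
  proof (rule sum_single)
    fix s assume s: "s \<in> {0..<t j}" "s \<noteq> ?s"
    show "Zmat t A Eh j $$ (q,s) * Zprod t A Eh j $$ (s,?l) = 0"
    proof (cases "s < ?s")
      case True then show ?thesis using Z_zero[OF j(1)] Suc.prems s by simp
    next
      case False
      then have "?l + t j < t 0 + s" using s Suc.prems tt t0 by simp
      then show ?thesis using U_zero[OF j(2)] Suc.prems s l by simp
    qed
  qed (use Suc.prems tt in auto)
  also have "\<dots> \<noteq> 0"
  proof -
    have "?l = t 0 - t j + ?s" using tt t0 by simp
    then have "Zprod t A Eh j $$ (?s,?l) \<noteq> 0" using Suc.IH[OF j(2), of ?s] Suc.prems tt by simp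
    moreover have "Zmat t A Eh j $$ (q,?s) \<noteq> 0" using Z_diag[OF j(1)] Suc.prems by simp
    ultimately show ?thesis by simp
  qed
  finally show ?case .
qed

lemma N_idx:
  assumes "j < k" "q < t j" "l < t 0"
  shows "N_mat k t A Eh $$ (TT j + q, l) = monom (Zprod t A Eh j $$ (q,l)) j"
proof -
  have e: "N_mat k t A Eh $$ (sum_list (take j (map t [0..<k])) + q, sum_list (take 0 [t 0]) + l)
     = (\<lambda>j _. map_mat (\<lambda>c. monom c j) (Zprod t A Eh j)) j 0 $$ (q,l)"
    unfolding N_mat_def by (rule block_mat_index) (use assms in simp_all)
  have ct: "sum_list (take j (map t [0..<k])) = TT j" using assms by (intro cs_take) simp
  from e show ?thesis unfolding ct using assms U_carr[of j] by simp
qed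

lemma AZ: assumes i: "i < k - 1" shows "A i * Zmat t A Eh i = - Ep i"
proof (rule eq_matI)
  have AW: "A i * W i = Eh i" unfolding W_def
    using assoc_mult_mat[OF A_carr[OF i] Ainv(1)[OF i] E_carr[OF i]] Ainv(2)[OF i] E_carr[OF i] by simp
  fix r q assume "r < dim_row (- Ep i)" "q < dim_col (- Ep i)"
  then have r: "r < t (Suc i)" and q: "q < t i" using Ep_carr[OF i] by auto
  have "(A i * Zmat t A Eh i) $$ (r,q) = (\<Sum>s = 0..<t (Suc i). A i $$ (r,s) * Zmat t A Eh i $$ (s,q))"
    using A_carr[OF i] Z_carr[OF i] r q by (simp add: scalar_prod_def)
  also have "\<dots> = - Ep i $$ (r,q)"
  proof (cases "q < t i - t (Suc i)")
    case True
    then show ?thesis using Z_idx[OF i _ q] Ep_idx[OF i r q] by simp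
  next
    case False
    let ?q = "q - (t i - t (Suc i))"
    have q': "?q < t (Suc i)" using q False by simp
    have "(\<Sum>s = 0..<t (Suc i). A i $$ (r,s) * Zmat t A Eh i $$ (s,q))
        = - (\<Sum>s = 0..<t (Suc i). A i $$ (r,s) * W i $$ (s,?q))"
      using Z_idx[OF i _ q] False by (simp add: sum_negf[symmetric])
    also have "(\<Sum>s = 0..<t (Suc i). A i $$ (r,s) * W i $$ (s,?q)) = (A i * W i) $$ (r, ?q)"
      using A_carr[OF i] W_carr[OF i] r q' by (simp add: scalar_prod_def)
    also have "\<dots> = Eh i $$ (r, ?q)" using AW by simp
    finally show ?thesis using Ep_idx[OF i r q] False by simp
  qed
  finally show "(A i * Zmat t A Eh i) $$ (r,q) = (- Ep i) $$ (r,q)" using Ep_carr[OF i] r q by simp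
qed (use A_carr[OF i] Z_carr[OF i] Ep_carr[OF i] in auto)

end

context bpc begin

definition "xb x j = vec (t j) (\<lambda>q. x $ (TT j + q))"
abbreviation "Pf \<equiv> to_rat_fun_mat (pencil (A_eps k t A) (E_eps k t Eh))"
abbreviation "Nf \<equiv> to_rat_fun_mat (N_mat k t A Eh)"

lemma Pf_carr: "Pf \<in> carrier_mat (RR (k - 1)) (TT k)"
  using A_eps_carr unfolding to_rat_fun_mat_def pencil_def by auto
lemma Nf_carr: "Nf \<in> carrier_mat (TT k) (t 0)"
  using N_carr unfolding to_rat_fun_mat_def by auto

lemma RR_pos: "i < k - 1 \<Longrightarrow> r < t (Suc i) \<Longrightarrow> RR i + r < RR (k - 1)"
  using block_pos_less[of i "k - 1" r "\<lambda>i. t (Suc i)"] unfolding RR_def by simp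
lemma TT_pos: "j < k \<Longrightarrow> q < t j \<Longrightarrow> TT j + q < TT k"
  using block_pos_less[of j k q t] unfolding TT_def by simp

lemma Pf_idx:
  assumes "i < k - 1" "r < t (Suc i)" "j < k" "q < t j"
  shows "Pf $$ (RR i + r, TT j + q) = (if j = Suc i then phi (A i $$ (r,q)) else 0)
     + (if j = i then LL * phi (Ep i $$ (r,q)) else 0)"
  using RR_pos[of i r] TT_pos[of j q] assms A_eps_carr E_eps_carr A_eps_idx E_eps_idx
  unfolding to_rat_fun_mat_def pencil_def by (simp add: to_fract_pCons2)

lemma Nf_idx:
  assumes "j < k" "q < t j" "l < t 0"
  shows "Nf $$ (TT j + q, l) = phi (Zprod t A Eh j $$ (q,l)) * LL ^ j"
  using TT_pos[of j q] assms N_carr N_idx unfolding to_rat_fun_mat_def by (simp add: to_fract_monom)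

lemma row_eq:
  assumes x: "x \<in> carrier_vec (TT k)" and i: "i < k - 1" and r: "r < t (Suc i)"
  shows "(Pf *\<^sub>v x) $ (RR i + r) = LL * (\<Sum>q<t i. phi (Ep i $$ (r,q)) * x $ (TT i + q))
     + (\<Sum>q<t (Suc i). phi (A i $$ (r,q)) * x $ (TT (Suc i) + q))"
proof -
  have a: "RR i + r < RR (k - 1)" using RR_pos i r .
  have "(Pf *\<^sub>v x) $ (RR i + r) = (\<Sum>b<TT k. Pf $$ (RR i + r, b) * x $ b)"
    using a x Pf_carr by (simp add: scalar_prod_def atLeast0LessThan)
  also have "\<dots> = (\<Sum>j<k. \<Sum>q<t j. Pf $$ (RR i + r, TT j + q) * x $ (TT j + q))"
    unfolding TT_def by (rule sum_blocks_reindex)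
  also have "\<dots> = (\<Sum>j<k. (if j = Suc i then (\<Sum>q<t j. phi (A i $$ (r,q)) * x $ (TT j + q)) else 0)
      + (if j = i then LL * (\<Sum>q<t j. phi (Ep i $$ (r,q)) * x $ (TT j + q)) else 0))"
  proof (rule sum.cong[OF refl])
    fix j assume j: "j \<in> {..<k}"
    show "(\<Sum>q<t j. Pf $$ (RR i + r, TT j + q) * x $ (TT j + q)) =
      (if j = Suc i then (\<Sum>q<t j. phi (A i $$ (r,q)) * x $ (TT j + q)) else 0)
      + (if j = i then LL * (\<Sum>q<t j. phi (Ep i $$ (r,q)) * x $ (TT j + q)) else 0)"
      using j i r by (auto simp: Pf_idx sum_distrib_left distrib_right mult.assoc sum.distrib intro!: sum.cong)
  qed
  also have "\<dots> = LL * (\<Sum>q<t i. phi (Ep i $$ (r,q)) * x $ (TT i + q))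
     + (\<Sum>q<t (Suc i). phi (A i $$ (r,q)) * x $ (TT (Suc i) + q))"
    using i by (simp add: sum.distrib)
  finally show ?thesis .
qed


lemma xb_carr[simp]: "xb x j \<in> carrier_vec (t j)" unfolding xb_def by simp
lemma xb_dim[simp]: "dim_vec (xb x j) = t j" unfolding xb_def by simp
lemma xb_idx[simp]: "q < t j \<Longrightarrow> xb x j $ q = x $ (TT j + q)" unfolding xb_def by simp

lemma row_vec:
  assumes x: "x \<in> carrier_vec (TT k)" and i: "i < k - 1" and r: "r < t (Suc i)"
  shows "(Pf *\<^sub>v x) $ (RR i + r) =
    (LL \<cdot>\<^sub>v (phi.mat_hom (Ep i) *\<^sub>v xb x i) + phi.mat_hom (A i) *\<^sub>v xb x (Suc i)) $ r"
proof -
  have 1: "(phi.mat_hom (Ep i) *\<^sub>v xb x i) $ r = (\<Sum>q<t i. phi (Ep i $$ (r,q)) * x $ (TT i + q))"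
    using Ep_carr[OF i] r by (auto simp: scalar_prod_def atLeast0LessThan intro!: sum.cong)
  have 2: "(phi.mat_hom (A i) *\<^sub>v xb x (Suc i)) $ r = (\<Sum>q<t (Suc i). phi (A i $$ (r,q)) * x $ (TT (Suc i) + q))"
    using A_carr[OF i] r by (auto simp: scalar_prod_def atLeast0LessThan intro!: sum.cong)
  show ?thesis unfolding row_eq[OF x i r] using Ep_carr[OF i] A_carr[OF i] r 1 2 by simp
qed

lemma Nf_block:
  assumes c: "c \<in> carrier_vec (t 0)" and j: "j < k"
  shows "xb (Nf *\<^sub>v c) j = LL ^ j \<cdot>\<^sub>v (phi.mat_hom (Zprod t A Eh j) *\<^sub>v c)"
proof (rule eq_vecI)
  have Uj: "Zprod t A Eh j \<in> carrier_mat (t j) (t 0)" using U_carr[OF j] .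
  fix q assume "q < dim_vec (LL ^ j \<cdot>\<^sub>v (phi.mat_hom (Zprod t A Eh j) *\<^sub>v c))"
  then have q: "q < t j" using Uj by simp
  have pos: "TT j + q < TT k" using TT_pos[OF j q] .
  have "xb (Nf *\<^sub>v c) j $ q = (Nf *\<^sub>v c) $ (TT j + q)" using q by simp
  also have "\<dots> = row Nf (TT j + q) \<bullet> c" using pos Nf_carr by simp
  also have "\<dots> = (\<Sum>l<t 0. Nf $$ (TT j + q, l) * c $ l)"
    unfolding scalar_prod_def using c pos Nf_carr by (auto simp: atLeast0LessThan intro!: sum.cong)
  also have "\<dots> = (\<Sum>l<t 0. LL ^ j * (phi (Zprod t A Eh j $$ (q,l)) * c $ l))"
    by (rule sum.cong[OF refl]) (simp add: Nf_idx[OF j q] mult.commute mult.left_commute)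
  also have "\<dots> = LL ^ j * (\<Sum>l<t 0. phi (Zprod t A Eh j $$ (q,l)) * c $ l)"
    by (simp add: sum_distrib_left)
  also have "(\<Sum>l<t 0. phi (Zprod t A Eh j $$ (q,l)) * c $ l) = (phi.mat_hom (Zprod t A Eh j) *\<^sub>v c) $ q"
    unfolding index_mult_mat_vec[of q "phi.mat_hom (Zprod t A Eh j)"]
    using q Uj c by (auto simp: scalar_prod_def atLeast0LessThan intro!: sum.cong)
  also have "LL ^ j * (phi.mat_hom (Zprod t A Eh j) *\<^sub>v c) $ q = (LL ^ j \<cdot>\<^sub>v (phi.mat_hom (Zprod t A Eh j) *\<^sub>v c)) $ q"
    using q Uj by simp
  finally show "xb (Nf *\<^sub>v c) j $ q = (LL ^ j \<cdot>\<^sub>v (phi.mat_hom (Zprod t A Eh j) *\<^sub>v c)) $ q" .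
qed (use U_carr[OF j] in simp)

lemma mhom_assoc:
  assumes "X \<in> carrier_mat a b" "Y \<in> carrier_mat b d" "v \<in> carrier_vec d"
  shows "phi.mat_hom X *\<^sub>v (phi.mat_hom Y *\<^sub>v v) = phi.mat_hom (X * Y) *\<^sub>v v"
proof -
  have 1: "phi.mat_hom X \<in> carrier_mat a b" using assms(1) by simp
  have 2: "phi.mat_hom Y \<in> carrier_mat b d" using assms(2) by simp
  have "phi.mat_hom (X * Y) *\<^sub>v v = (phi.mat_hom X * phi.mat_hom Y) *\<^sub>v v"
    by (simp only: phi.mat_hom_mult[OF assms(1,2)])
  also have "\<dots> = phi.mat_hom X *\<^sub>v (phi.mat_hom Y *\<^sub>v v)" by (rule assoc_mult_mat_vec[OF 1 2 assms(3)])
  finally show ?thesis by (rule sym)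
qed

lemma mhom_neg:
  assumes "X \<in> carrier_mat a b" "v \<in> carrier_vec b"
  shows "r < a \<Longrightarrow> (phi.mat_hom (- X) *\<^sub>v v) $ r = - ((phi.mat_hom X *\<^sub>v v) $ r)"
  using assms by (auto simp: scalar_prod_def sum_negf[symmetric] phi.hom_uminus intro!: sum.cong)

lemma null_N:
  assumes c: "c \<in> carrier_vec (t 0)"
  shows "Pf *\<^sub>v (Nf *\<^sub>v c) = 0\<^sub>v (RR (k - 1))"
proof (rule eq_vecI)
  fix a assume "a < dim_vec (0\<^sub>v (RR (k - 1)) :: complex poly fract vec)"
  then have "a < (\<Sum>i<k-1. t (Suc i))" unfolding RR_def by simp
  then obtain i r where i: "i < k - 1" and r: "r < t (Suc i)" and a: "a = RR i + r"
    using decompose_blocks[where f="\<lambda>i. t (Suc i)" and a=a and m="k - 1"] unfolding RR_def by blast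
  have x: "Nf *\<^sub>v c \<in> carrier_vec (TT k)" using Nf_carr c by simp
  have ik: "i < k" "Suc i < k" using i by auto
  let ?M = "phi.mat_hom"
  let ?U = "Zprod t A Eh"
  have Ui: "?U i \<in> carrier_mat (t i) (t 0)" using U_carr ik by simp
  have e1: "?M (Ep i) *\<^sub>v (LL ^ i \<cdot>\<^sub>v (?M (?U i) *\<^sub>v c)) = LL ^ i \<cdot>\<^sub>v (?M (Ep i * ?U i) *\<^sub>v c)"
    using mult_mat_vec[of "?M (Ep i)" _ _ "?M (?U i) *\<^sub>v c"] mhom_assoc[OF Ep_carr[OF i] Ui c] Ep_carr[OF i] Ui c
    by simp
  have AU: "A i * ?U (Suc i) = - (Ep i * ?U i)"
  proof -
    have "A i * ?U (Suc i) = A i * (Zmat t A Eh i * ?U i)" by simp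
    also have "\<dots> = (A i * Zmat t A Eh i) * ?U i" using A_carr[OF i] Z_carr[OF i] Ui
      by (simp add: assoc_mult_mat)
    also have "\<dots> = - (Ep i * ?U i)" unfolding AZ[OF i] using Ep_carr[OF i] Ui by simp
    finally show ?thesis .
  qed
  have USi: "?U (Suc i) \<in> carrier_mat (t (Suc i)) (t 0)" using U_carr[OF ik(2)] by simp
  have e2: "?M (A i) *\<^sub>v (LL ^ Suc i \<cdot>\<^sub>v (?M (?U (Suc i)) *\<^sub>v c)) = LL ^ Suc i \<cdot>\<^sub>v (?M (- (Ep i * ?U i)) *\<^sub>v c)"
    using mult_mat_vec[of "?M (A i)" _ _ "?M (?U (Suc i)) *\<^sub>v c"] mhom_assoc[OF A_carr[OF i] USi c] A_carr[OF i] USi c AU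
    by simp
  have EU: "Ep i * ?U i \<in> carrier_mat (t (Suc i)) (t 0)" using Ep_carr[OF i] Ui by simp
  have "(Pf *\<^sub>v (Nf *\<^sub>v c)) $ a = (LL \<cdot>\<^sub>v (LL ^ i \<cdot>\<^sub>v (?M (Ep i * ?U i) *\<^sub>v c)) + LL ^ Suc i \<cdot>\<^sub>v (?M (- (Ep i * ?U i)) *\<^sub>v c)) $ r"
    unfolding a row_vec[OF x i r] Nf_block[OF c ik(1)] Nf_block[OF c ik(2)] e1 e2 ..
  also have "\<dots> = 0"
  proof -
    let ?X = "Ep i * ?U i"
    have d: "dim_row ?X = t (Suc i)" "dim_col ?X = t 0" using EU by auto
    have w: "(?M (- ?X) *\<^sub>v c) $ r = - ((?M ?X *\<^sub>v c) $ r)"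
      using mhom_neg[OF EU c] r by simp
    show ?thesis using r d w by simp
  qed
  finally show "(Pf *\<^sub>v (Nf *\<^sub>v c)) $ a = 0\<^sub>v (RR (k - 1)) $ a" using a RR_pos[OF i r] by simp
qed (use Pf_carr in simp)

end

context bpc begin

lemma TT0[simp]: "TT 0 = 0" unfolding TT_def by simp

lemma mult_mat_vec_zero_right: "B \<in> carrier_mat a b \<Longrightarrow> B *\<^sub>v 0\<^sub>v b = 0\<^sub>v a"
  by (intro eq_vecI) (auto simp: scalar_prod_def)

lemma Nf_top: assumes c: "c \<in> carrier_vec (t 0)" shows "xb (Nf *\<^sub>v c) 0 = c"
proof -
  have "xb (Nf *\<^sub>v c) 0 = LL ^ 0 \<cdot>\<^sub>v (phi.mat_hom (Zprod t A Eh 0) *\<^sub>v c)"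
    using Nf_block[OF c] k2 by simp
  also have "\<dots> = c" using c by (simp add: phi.mat_hom_one)
  finally show ?thesis .
qed

lemma null_top_zero:
  assumes x: "x \<in> carrier_vec (TT k)" and Px: "Pf *\<^sub>v x = 0\<^sub>v (RR (k - 1))"
    and top: "\<And>q. q < t 0 \<Longrightarrow> x $ q = 0"
  shows "x = 0\<^sub>v (TT k)"
proof -
  let ?M = "phi.mat_hom"
  have blk: "j < k \<Longrightarrow> xb x j = 0\<^sub>v (t j)" for j
  proof (induction j)
    case 0 show ?case using top by (intro eq_vecI) auto
  next
    case (Suc j)
    then have j: "j < k - 1" "j < k" by auto
    have vec0: "LL \<cdot>\<^sub>v (?M (Ep j) *\<^sub>v xb x j) + ?M (A j) *\<^sub>v xb x (Suc j) = 0\<^sub>v (t (Suc j))"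
    proof (rule eq_vecI)
      fix r assume "r < dim_vec (0\<^sub>v (t (Suc j)) :: complex poly fract vec)"
      then have r: "r < t (Suc j)" by simp
      have "(LL \<cdot>\<^sub>v (?M (Ep j) *\<^sub>v xb x j) + ?M (A j) *\<^sub>v xb x (Suc j)) $ r = (Pf *\<^sub>v x) $ (RR j + r)"
        using row_vec[OF x j(1) r] by simp
      also have "\<dots> = 0" using Px RR_pos[OF j(1) r] by simp
      finally show "(LL \<cdot>\<^sub>v (?M (Ep j) *\<^sub>v xb x j) + ?M (A j) *\<^sub>v xb x (Suc j)) $ r = 0\<^sub>v (t (Suc j)) $ r"
        using r by simp
    qed (use A_carr[OF j(1)] in simp)
    have "?M (Ep j) *\<^sub>v xb x j = 0\<^sub>v (t (Suc j))" using Suc.IH[OF j(2)] Ep_carr[OF j(1)]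
      by (simp add: mult_mat_vec_zero_right)
    moreover have "LL \<cdot>\<^sub>v 0\<^sub>v (t (Suc j)) = (0\<^sub>v (t (Suc j)) :: complex poly fract vec)"
      by (intro eq_vecI) auto
    moreover have "?M (A j) *\<^sub>v xb x (Suc j) \<in> carrier_vec (t (Suc j))" using A_carr[OF j(1)] by simp
    ultimately have Av: "?M (A j) *\<^sub>v xb x (Suc j) = 0\<^sub>v (t (Suc j))"
      using vec0 by simp
    have "xb x (Suc j) = ?M (mat_inv (A j) * A j) *\<^sub>v xb x (Suc j)"
      unfolding Ainv(3)[OF j(1)] by (simp add: phi.mat_hom_one)
    also have "\<dots> = ?M (mat_inv (A j)) *\<^sub>v (?M (A j) *\<^sub>v xb x (Suc j))"
      by (rule mhom_assoc[symmetric, OF Ainv(1)[OF j(1)] A_carr[OF j(1)] xb_carr])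
    also have "\<dots> = 0\<^sub>v (t (Suc j))" unfolding Av using Ainv(1)[OF j(1)]
      by (intro mult_mat_vec_zero_right) simp
    finally show ?case .
  qed
  show ?thesis
  proof (rule eq_vecI)
    fix b assume "b < dim_vec (0\<^sub>v (TT k) :: complex poly fract vec)"
    then have "b < (\<Sum>i<k. t i)" unfolding TT_def by simp
    then obtain j q where j: "j < k" and q: "q < t j" and b: "b = TT j + q"
      using decompose_blocks[where f=t and a=b and m=k] unfolding TT_def by blast
    have "x $ b = xb x j $ q" using b q by simp
    also have "\<dots> = 0" using blk[OF j] q by simp
    finally show "x $ b = 0\<^sub>v (TT k) $ b" using b TT_pos[OF j q] by simp
  qed (use x in simp)
qed

lemma null_char:
  assumes x: "x \<in> carrier_vec (TT k)" and Px: "Pf *\<^sub>v x = 0\<^sub>v (RR (k - 1))"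
  shows "x = Nf *\<^sub>v xb x 0"
proof -
  let ?c = "xb x 0"
  have c: "?c \<in> carrier_vec (t 0)" by simp
  let ?y = "x - Nf *\<^sub>v ?c"
  have Nc: "Nf *\<^sub>v ?c \<in> carrier_vec (TT k)" using Nf_carr c by simp
  have y: "?y \<in> carrier_vec (TT k)" using x Nc by simp
  have "Pf *\<^sub>v ?y = Pf *\<^sub>v x - Pf *\<^sub>v (Nf *\<^sub>v ?c)"
    by (rule mult_minus_distrib_mat_vec[OF Pf_carr x Nc])
  also have "\<dots> = 0\<^sub>v (RR (k - 1))" unfolding Px null_N[OF c] by simp
  finally have Py: "Pf *\<^sub>v ?y = 0\<^sub>v (RR (k - 1))" .
  have top: "?y $ q = 0" if q: "q < t 0" for q
  proof -
    have "(Nf *\<^sub>v ?c) $ q = xb (Nf *\<^sub>v ?c) 0 $ q" using q by simp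
    also have "\<dots> = ?c $ q" unfolding Nf_top[OF c] ..
    also have "\<dots> = x $ q" using q by simp
    finally have "(Nf *\<^sub>v ?c) $ q = x $ q" .
    moreover have "q < TT k" using TT_pos[of 0 q] q k2 by simp
    moreover have "dim_vec (Nf *\<^sub>v ?c) = TT k" using Nf_carr by simp
    ultimately show ?thesis by (subst index_minus_vec(1)) auto
  qed
  have y0: "?y = 0\<^sub>v (TT k)" by (rule null_top_zero[OF y Py top])
  have dN: "dim_vec (Nf *\<^sub>v ?c) = TT k" using Nf_carr by simp
  show ?thesis
  proof (rule eq_vecI)
    fix b assume b: "b < dim_vec (Nf *\<^sub>v ?c)"
    have "?y $ b = 0" using y0 b dN by simp
    then show "x $ b = (Nf *\<^sub>v ?c) $ b" using index_minus_vec(1)[OF b, of x] by simp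
  qed (use x dN in simp)
qed

end

lemma sum_split_add: fixes S c :: nat shows "(\<Sum>b<S + c. g b) = (\<Sum>b<S. g b) + (\<Sum>q<c. g (S + q))"
  by (induction c) (simp_all add: add.assoc)

context bpc begin

abbreviation "PP \<equiv> pencil (A_eps k t A) (E_eps k t Eh)"
abbreviation "NN \<equiv> N_mat k t A Eh"

lemma P_dims: "dim_col PP = TT k" "dim_row PP = RR (k - 1)"
  using A_eps_carr unfolding pencil_def by auto

lemma null_iff: "x \<in> right_null_space PP \<longleftrightarrow> x \<in> carrier_vec (TT k) \<and> Pf *\<^sub>v x = 0\<^sub>v (RR (k - 1))"
  unfolding right_null_space_def P_dims by simp

lemma col_Nf: "j < t 0 \<Longrightarrow> col Nf j = Nf *\<^sub>v unit_vec (t 0) j"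
  using Nf_carr by (intro eq_vecI) (auto simp: scalar_prod_right_unit)

lemma basis: "poly_basis_of_null_space PP NN"
  unfolding poly_basis_of_null_space_def
proof (intro conjI allI impI ballI)
  show "dim_row NN = dim_col PP" using N_carr P_dims by simp
  fix j assume "j < dim_col NN"
  then have j: "j < t 0" using N_carr by simp
  show "col Nf j \<in> right_null_space PP"
    unfolding null_iff col_Nf[OF j] using null_N[of "unit_vec (t 0) j"] Nf_carr by simp
next
  fix x assume x: "x \<in> right_null_space PP"
  then have xc: "x \<in> carrier_vec (TT k)" and Px: "Pf *\<^sub>v x = 0\<^sub>v (RR (k - 1))" using null_iff by auto
  have dN: "dim_col NN = t 0" using N_carr by simp
  show "\<exists>!c. c \<in> carrier_vec (dim_col NN) \<and> Nf *\<^sub>v c = x"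
  proof (rule ex1I[of _ "xb x 0"])
    show "xb x 0 \<in> carrier_vec (dim_col NN) \<and> Nf *\<^sub>v xb x 0 = x"
      using null_char[OF xc Px] dN by simp
    fix c assume "c \<in> carrier_vec (dim_col NN) \<and> Nf *\<^sub>v c = x"
    then show "c = xb x 0" using Nf_top[of c] dN by auto
  qed
qed

lemma rank_P: "normal_rank PP = RR (k - 1)"
proof -
  let ?R = "RR (k - 1)"
  have nr: "normal_rank PP = vec_space.rank ?R Pf"
    unfolding normal_rank_def P_dims ..
  have le: "vec_space.rank ?R Pf \<le> ?R" by (rule vec_space.rank_le_nr[OF Pf_carr])
  let ?Jset = "{t 0..}"
  let ?Sm = "submatrix Pf UNIV ?Jset"
  have TTk: "TT k = t 0 + ?R" using TT_Suc[of "k - 1"] k2 by simp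
  have setJ: "{j. j < TT k \<and> j \<in> ?Jset} = {t 0..<TT k}" by auto
  have cardJ: "card {j. j < dim_col Pf \<and> j \<in> ?Jset} = ?R" using Pf_carr setJ TTk by simp
  have cardI: "card {i. i < dim_row Pf \<and> i \<in> UNIV} = ?R" using Pf_carr by simp
  have S: "?Sm \<in> carrier_mat ?R ?R" by (rule carrier_matI) (simp only: dim_submatrix cardI cardJ)+
  have pick: "pick ?Jset j = t 0 + j" for j
  proof -
    have "{a \<in> ?Jset. a < t 0 + j} = {t 0..<t 0 + j}" by auto
    then have "card {a \<in> ?Jset. a < t 0 + j} = j" by simp
    then show ?thesis using pick_card_in_set[of "t 0 + j" ?Jset] by simp
  qed
  have Sidx: "i < ?R \<Longrightarrow> j < ?R \<Longrightarrow> ?Sm $$ (i,j) = Pf $$ (i, t 0 + j)" for i j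
    using submatrix_index[of i Pf UNIV j ?Jset] cardI cardJ pick by (simp add: pick_UNIV)
  have "det ?Sm \<noteq> 0"
  proof
    assume "det ?Sm = 0"
    then obtain v where v: "v \<in> carrier_vec ?R" "v \<noteq> 0\<^sub>v ?R" "?Sm *\<^sub>v v = 0\<^sub>v ?R"
      using det_0_iff_vec_prod_zero_field[OF S] by blast
    define x where "x = vec (TT k) (\<lambda>b. if b < t 0 then 0 else v $ (b - t 0))"
    have x: "x \<in> carrier_vec (TT k)" unfolding x_def by simp
    have Px: "Pf *\<^sub>v x = 0\<^sub>v ?R"
    proof (rule eq_vecI)
      fix a assume "a < dim_vec (0\<^sub>v ?R :: complex poly fract vec)"
      then have a: "a < ?R" by simp
      have "(Pf *\<^sub>v x) $ a = (\<Sum>b<TT k. Pf $$ (a, b) * x $ b)"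
        using a x Pf_carr by (auto simp: scalar_prod_def atLeast0LessThan intro!: sum.cong)
      also have "\<dots> = (\<Sum>b<t 0. Pf $$ (a, b) * x $ b) + (\<Sum>j<?R. Pf $$ (a, t 0 + j) * x $ (t 0 + j))"
        unfolding TTk by (rule sum_split_add)
      also have "(\<Sum>b<t 0. Pf $$ (a, b) * x $ b) = 0"
        using TTk by (intro sum.neutral) (auto simp: x_def)
      also have "(\<Sum>j<?R. Pf $$ (a, t 0 + j) * x $ (t 0 + j)) = (\<Sum>j<?R. ?Sm $$ (a, j) * v $ j)"
        using TTk a by (intro sum.cong) (auto simp: x_def Sidx)
      also have "\<dots> = (?Sm *\<^sub>v v) $ a"
        using a S v(1) by (auto simp: scalar_prod_def atLeast0LessThan intro!: sum.cong)
      also have "\<dots> = 0" using v(3) a by simp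
      finally show "(Pf *\<^sub>v x) $ a = 0\<^sub>v ?R $ a" using a by simp
    qed (use Pf_carr in simp)
    have "x = 0\<^sub>v (TT k)" by (rule null_top_zero[OF x Px]) (use TTk in \<open>auto simp: x_def\<close>)
    then have "v = 0\<^sub>v ?R"
    proof (intro eq_vecI)
      fix j assume "x = 0\<^sub>v (TT k)" "j < dim_vec (0\<^sub>v ?R :: complex poly fract vec)"
      then have j: "j < ?R" and "x $ (t 0 + j) = 0" using TTk by auto
      then show "v $ j = 0\<^sub>v ?R $ j" using TTk by (simp add: x_def)
    qed (use v(1) in simp)
    then show False using v(2) by simp
  qed
  from vec_space.rank_gt_minor[OF Pf_carr this] cardJ Pf_carr
  have "?R \<le> vec_space.rank ?R Pf" by simp
  then show ?thesis using nr le by simp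
qed

end

context bpc begin

definition "dd l = Max {j. j < k \<and> t 0 \<le> l + t j}"

lemma dd_fin: "finite {j. j < k \<and> t 0 \<le> l + t j}" by simp
lemma dd_ne: "0 \<in> {j. j < k \<and> t 0 \<le> l + t j}" using k2 by simp
lemma dd_mem: "dd l < k" "t 0 \<le> l + t (dd l)"
proof -
  have "dd l \<in> {j. j < k \<and> t 0 \<le> l + t j}" unfolding dd_def
    by (rule Max_in[OF dd_fin]) (use dd_ne in auto)
  then show "dd l < k" "t 0 \<le> l + t (dd l)" by auto
qed
lemma dd_ge: "j < k \<Longrightarrow> t 0 \<le> l + t j \<Longrightarrow> j \<le> dd l"
  unfolding dd_def by (rule Max_ge[OF dd_fin]) simp
lemma dd_mono: "l \<le> l' \<Longrightarrow> dd l \<le> dd l'"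
  using dd_mem[of l] by (intro dd_ge) auto

lemma U_nz: "j < k \<Longrightarrow> q < t j \<Longrightarrow> l < t 0 \<Longrightarrow> Zprod t A Eh j $$ (q,l) \<noteq> 0 \<Longrightarrow> t 0 \<le> l + t j"
  using U_zero[of j q l] by linarith

lemma col_deg_N: assumes l: "l < t 0" shows "col_degree NN l \<le> dd l"
  unfolding col_degree_def
proof (rule Max.boundedI)
  show "finite (insert 0 {degree (NN $$ (i, l)) |i. i < dim_row NN})" by simp
  show "insert 0 {degree (NN $$ (i, l)) |i. i < dim_row NN} \<noteq> {}" by simp
  fix x assume "x \<in> insert 0 {degree (NN $$ (i, l)) |i. i < dim_row NN}"
  then consider "x = 0" | a where "a < TT k" "x = degree (NN $$ (a, l))" using N_carr by auto
  then show "x \<le> dd l"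
  proof cases
    case 2
    then have "a < (\<Sum>i<k. t i)" unfolding TT_def by simp
    then obtain j q where j: "j < k" and q: "q < t j" and a: "a = TT j + q"
      using decompose_blocks[where f=t and a=a and m=k] unfolding TT_def by blast
    show ?thesis
    proof (cases "Zprod t A Eh j $$ (q,l) = 0")
      case True then show ?thesis using 2 a N_idx[OF j q l] by simp
    next
      case False
      then have "t 0 \<le> l + t j" using U_nz[OF j q l] by simp
      then have "j \<le> dd l" using dd_ge j by simp
      then show ?thesis using 2 a N_idx[OF j q l] by (simp add: degree_monom_eq[OF False])
    qed
  qed simp
qed

lemma pred_deg:
  fixes c :: "nat \<Rightarrow> complex poly"
  assumes l0: "l0 < t 0" "c l0 \<noteq> 0"
  shows "\<exists>a < TT k. dd l0 \<le> degree (\<Sum>l<t 0. NN $$ (a,l) * c l)"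
proof -
  define L where "L = {l. l < t 0 \<and> c l \<noteq> 0}"
  define g where "g l = dd l + degree (c l)" for l
  have finL: "finite L" unfolding L_def by simp
  have l0L: "l0 \<in> L" using l0 unfolding L_def by simp
  define D where "D = Max (g ` L)"
  have gD: "l \<in> L \<Longrightarrow> g l \<le> D" for l unfolding D_def using finL by simp
  have "D \<in> g ` L" unfolding D_def using finL l0L by (intro Max_in) auto
  define L' where "L' = {l \<in> L. g l = D}"
  have finL': "finite L'" unfolding L'_def using finL by simp
  have L'ne: "L' \<noteq> {}" using \<open>D \<in> g ` L\<close> unfolding L'_def by auto
  define ls where "ls = Max L'"
  have lsL': "ls \<in> L'" unfolding ls_def using finL' L'ne by (rule Max_in)
  have lsmax: "l \<in> L' \<Longrightarrow> l \<le> ls" for l unfolding ls_def using finL' by simp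
  have ls: "ls < t 0" "c ls \<noteq> 0" "g ls = D" using lsL' unfolding L'_def L_def by auto
  define i where "i = dd ls"
  have i: "i < k" "t 0 \<le> ls + t i" using dd_mem unfolding i_def by auto
  define q where "q = ls + t i - t 0"
  have q: "q < t i" using i ls unfolding q_def by simp
  have lsq: "t 0 - t i + q = ls" using i t_le0[OF i(1)] unfolding q_def by simp
  define e where "e = degree (c ls)"
  have De: "D = i + e" using ls(3) unfolding g_def i_def e_def by simp
  define a where "a = TT i + q"
  have a: "a < TT k" unfolding a_def using TT_pos[OF i(1) q] .
  define S where "S = (\<Sum>l<t 0. NN $$ (a,l) * c l)"
  have "coeff S (i + e) = (\<Sum>l<t 0. Zprod t A Eh i $$ (q,l) * coeff (c l) e)"
    unfolding S_def coeff_sum a_def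
    by (intro sum.cong refl) (simp add: N_idx[OF i(1) q] coeff_monom_mult)
  also have "\<dots> = Zprod t A Eh i $$ (q,ls) * coeff (c ls) e"
  proof (rule sum_single)
    fix l assume l: "l \<in> {..<t 0}" "l \<noteq> ls"
    show "Zprod t A Eh i $$ (q,l) * coeff (c l) e = 0"
    proof (cases "l < ls")
      case True
      then have "l + t i < t 0 + q" using i unfolding q_def by simp
      then show ?thesis using U_zero[OF i(1) q] l by simp
    next
      case False
      then have gt: "ls < l" using l by simp
      show ?thesis
      proof (cases "c l = 0")
        case False
        then have lL: "l \<in> L" using l unfolding L_def by simp
        have "g l \<noteq> D" using lsmax[of l] gt lL unfolding L'_def by auto
        then have "g l < D" using gD[OF lL] by simp
        moreover have "i \<le> dd l" unfolding i_def using gt by (intro dd_mono) simp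
        ultimately have "degree (c l) < e" unfolding g_def De by simp
        then show ?thesis by (simp add: coeff_eq_0)
      qed simp
    qed
  qed (use ls in auto)
  finally have "coeff S (i + e) \<noteq> 0"
    using U_diag[OF i(1) q] lsq ls(2) unfolding e_def by simp
  then have "i + e \<le> degree S" by (rule le_degree)
  moreover have "dd l0 \<le> D" using gD[OF l0L] unfolding g_def by simp
  ultimately show ?thesis using a De unfolding S_def by auto
qed

end


context bpc begin

lemma minimal:
  assumes Mb: "poly_basis_of_null_space PP M"
  shows "sum_col_degrees NN \<le> sum_col_degrees M"
proof -
  let ?m = "dim_col M"
  let ?Mf = "to_rat_fun_mat M"
  have dM: "dim_row M = TT k" using Mb P_dims unfolding poly_basis_of_null_space_def by simp
  have Mcol: "\<And>j. j < ?m \<Longrightarrow> col ?Mf j \<in> right_null_space PP"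
    using Mb unfolding poly_basis_of_null_space_def by auto
  have Muniq: "\<And>x. x \<in> right_null_space PP \<Longrightarrow> \<exists>!c. c \<in> carrier_vec ?m \<and> ?Mf *\<^sub>v c = x"
    using Mb unfolding poly_basis_of_null_space_def by auto
  have Mf_carr: "?Mf \<in> carrier_mat (TT k) ?m" using dM unfolding to_rat_fun_mat_def by auto
  have t0k: "t 0 \<le> TT k" using TT_Suc[of "k - 1"] k2 by simp
  define C where "C = mat (t 0) ?m (\<lambda>(l,j). M $$ (l,j))"
  define Cf where "Cf = map_mat to_fract C"
  have Cf_carr: "Cf \<in> carrier_mat (t 0) ?m" unfolding Cf_def C_def by simp
  have Mentry: "M $$ (a,j) = (\<Sum>l<t 0. NN $$ (a,l) * M $$ (l,j))" if a: "a < TT k" and j: "j < ?m" for a j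
  proof -
    let ?x = "col ?Mf j"
    have x: "?x \<in> carrier_vec (TT k)" "Pf *\<^sub>v ?x = 0\<^sub>v (RR (k - 1))" using Mcol[OF j] null_iff by auto
    have "to_fract (M $$ (a,j)) = ?x $ a" using a j dM unfolding to_rat_fun_mat_def by simp
    also have "\<dots> = (Nf *\<^sub>v xb ?x 0) $ a" using null_char[OF x] by simp
    also have "\<dots> = (\<Sum>l<t 0. Nf $$ (a,l) * xb ?x 0 $ l)"
      using a Nf_carr by (auto simp: scalar_prod_def atLeast0LessThan intro!: sum.cong)
    also have "\<dots> = (\<Sum>l<t 0. to_fract (NN $$ (a,l)) * to_fract (M $$ (l,j)))"
      using a j dM t0k N_carr unfolding to_rat_fun_mat_def by (intro sum.cong) auto
    also have "\<dots> = to_fract (\<Sum>l<t 0. NN $$ (a,l) * M $$ (l,j))" by simp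
    finally have "to_fract (M $$ (a,j)) = to_fract (\<Sum>l<t 0. NN $$ (a,l) * M $$ (l,j))" .
    then show ?thesis unfolding to_fract_eq_iff .
  qed
  have MNC: "?Mf = Nf * Cf"
  proof (rule eq_matI)
    fix a j assume "a < dim_row (Nf * Cf)" "j < dim_col (Nf * Cf)"
    then have a: "a < TT k" and j: "j < ?m" using Nf_carr Cf_carr by auto
    have "?Mf $$ (a,j) = to_fract (\<Sum>l<t 0. NN $$ (a,l) * M $$ (l,j))"
      using Mentry[OF a j] a j dM unfolding to_rat_fun_mat_def by simp
    also have "\<dots> = (\<Sum>l<t 0. Nf $$ (a,l) * Cf $$ (l,j))"
      using a j N_carr unfolding to_rat_fun_mat_def Cf_def C_def by (auto intro!: sum.cong)
    also have "\<dots> = (Nf * Cf) $$ (a,j)"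
      using a j Nf_carr Cf_carr by (auto simp: scalar_prod_def atLeast0LessThan intro!: sum.cong)
    finally show "?Mf $$ (a,j) = (Nf * Cf) $$ (a,j)" .
  qed (use Nf_carr Cf_carr Mf_carr in auto)
  have zero_null: "0\<^sub>v (TT k) \<in> right_null_space PP"
    unfolding null_iff using Pf_carr by (simp add: mult_mat_vec_zero_right)
  have m_le: "?m \<le> t 0"
  proof (rule vec_space.inj_cols_le[OF Cf_carr])
    fix a assume a: "a \<in> carrier_vec ?m" and Ca: "Cf *\<^sub>v a = 0\<^sub>v (t 0)"
    have "?Mf *\<^sub>v a = Nf *\<^sub>v (Cf *\<^sub>v a)" unfolding MNC using Nf_carr Cf_carr a
      by (rule assoc_mult_mat_vec)
    also have "\<dots> = 0\<^sub>v (TT k)" unfolding Ca using Nf_carr by (rule mult_mat_vec_zero_right)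
    finally have P1: "a \<in> carrier_vec ?m \<and> ?Mf *\<^sub>v a = 0\<^sub>v (TT k)" using a by simp
    have P2: "0\<^sub>v ?m \<in> carrier_vec ?m \<and> ?Mf *\<^sub>v 0\<^sub>v ?m = 0\<^sub>v (TT k)"
      using Mf_carr by (simp add: mult_mat_vec_zero_right)
    show "a = 0\<^sub>v ?m" using Muniq[OF zero_null] P1 P2 by blast
  qed
  have surj: "\<forall>l. \<exists>a. l < t 0 \<longrightarrow> a \<in> carrier_vec ?m \<and> Cf *\<^sub>v a = unit_vec (t 0) l"
  proof (intro allI)
    fix l
    show "\<exists>a. l < t 0 \<longrightarrow> a \<in> carrier_vec ?m \<and> Cf *\<^sub>v a = unit_vec (t 0) l"
    proof (cases "l < t 0")
      case True
      let ?e = "unit_vec (t 0) l :: complex poly fract vec"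
      have "Nf *\<^sub>v ?e \<in> right_null_space PP" unfolding null_iff using null_N[of ?e] Nf_carr by simp
      then obtain a where a: "a \<in> carrier_vec ?m" "?Mf *\<^sub>v a = Nf *\<^sub>v ?e" using Muniq by blast
      have "Nf *\<^sub>v (Cf *\<^sub>v a) = Nf *\<^sub>v ?e"
        using a assoc_mult_mat_vec[OF Nf_carr Cf_carr a(1)] MNC by simp
      then have "xb (Nf *\<^sub>v (Cf *\<^sub>v a)) 0 = xb (Nf *\<^sub>v ?e) 0" by simp
      then have "Cf *\<^sub>v a = ?e" using Nf_top[of ?e] Nf_top[of "Cf *\<^sub>v a"] Cf_carr a(1) by simp
      then show ?thesis using a(1) by blast
    qed simp
  qed
  then obtain f where f: "\<And>l. l < t 0 \<Longrightarrow> f l \<in> carrier_vec ?m \<and> Cf *\<^sub>v f l = unit_vec (t 0) l"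
    by metis
  define B where "B = mat ?m (t 0) (\<lambda>(i,l). f l $ i)"
  have B_carr: "B \<in> carrier_mat ?m (t 0)" unfolding B_def by simp
  have CB: "Cf * B = 1\<^sub>m (t 0)"
  proof (rule eq_matI)
    fix i l assume "i < dim_row (1\<^sub>m (t 0) :: complex poly fract mat)" "l < dim_col (1\<^sub>m (t 0) :: complex poly fract mat)"
    then have i: "i < t 0" and l: "l < t 0" by auto
    have colB: "col B l = f l" using f[OF l] l unfolding B_def by (intro eq_vecI) auto
    have "(Cf * B) $$ (i,l) = row Cf i \<bullet> col B l" using i l Cf_carr B_carr by simp
    also have "\<dots> = (Cf *\<^sub>v f l) $ i" unfolding colB using i Cf_carr by simp
    also have "\<dots> = unit_vec (t 0) l $ i" using f[OF l] by simp
    finally show "(Cf * B) $$ (i,l) = 1\<^sub>m (t 0) $$ (i,l)" using i l by simp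
  qed (use Cf_carr B_carr in auto)
  have m_ge: "t 0 \<le> ?m"
  proof (rule vec_space.inj_cols_le[OF B_carr])
    fix w assume w: "w \<in> carrier_vec (t 0)" and Bw: "B *\<^sub>v w = 0\<^sub>v ?m"
    have "w = (Cf * B) *\<^sub>v w" unfolding CB using w by simp
    also have "\<dots> = Cf *\<^sub>v (B *\<^sub>v w)" using Cf_carr B_carr w by (rule assoc_mult_mat_vec)
    also have "\<dots> = 0\<^sub>v (t 0)" unfolding Bw using Cf_carr by (rule mult_mat_vec_zero_right)
    finally show "w = 0\<^sub>v (t 0)" .
  qed
  have m: "?m = t 0" using m_le m_ge by simp
  have Cf_sq: "Cf \<in> carrier_mat (t 0) (t 0)" using Cf_carr m by simp
  have B_sq: "B \<in> carrier_mat (t 0) (t 0)" using B_carr m by simp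
  have "det Cf * det B = 1" using det_mult[OF Cf_sq B_sq] CB by simp
  then have "det Cf \<noteq> 0" by auto
  then have "(\<Sum>p \<in> {p. p permutes {0..<t 0}}. signof p * (\<Prod>i = 0..<t 0. Cf $$ (i, p i))) \<noteq> 0"
    using det_def'[OF Cf_sq] by simp
  then obtain p where p: "p permutes {0..<t 0}" and pp: "signof p * (\<Prod>i = 0..<t 0. Cf $$ (i, p i)) \<noteq> 0"
    by (metis (no_types, lifting) mem_Collect_eq sum.neutral)
  have pnz: "Cf $$ (i, p i) \<noteq> 0" if i: "i < t 0" for i
    using pp i by (auto simp: prod_zero_iff)
  have pi: "p i < t 0" if "i < t 0" for i using permutes_in_image[OF p] that by simp
  have deg_le: "col_degree NN i \<le> col_degree M (p i)" if i: "i < t 0" for i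
  proof -
    have Mnz: "M $$ (i, p i) \<noteq> 0" using pnz[OF i] pi[OF i] i m unfolding Cf_def C_def by simp
    obtain a where a: "a < TT k" and da: "dd i \<le> degree (\<Sum>l<t 0. NN $$ (a,l) * M $$ (l, p i))"
      using pred_deg[of i "\<lambda>l. M $$ (l, p i)"] i Mnz by blast
    have "degree (M $$ (a, p i)) \<le> col_degree M (p i)"
      unfolding col_degree_def using a dM by (intro Max_ge) auto
    then have "dd i \<le> col_degree M (p i)" using da Mentry[OF a] pi[OF i] m by simp
    then show ?thesis using col_deg_N[OF i] by simp
  qed
  have "sum_col_degrees NN = (\<Sum>i<t 0. col_degree NN i)" unfolding sum_col_degrees_def using N_carr by simp
  also have "\<dots> \<le> (\<Sum>i<t 0. col_degree M (p i))" using deg_le by (intro sum_mono) simp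
  also have "\<dots> = (\<Sum>j<t 0. col_degree M j)"
  proof (rule sum.reindex_bij_betw)
    show "bij_betw p {..<t 0} {..<t 0}" using permutes_imp_bij[OF p] by (simp add: atLeast0LessThan)
  qed
  also have "\<dots> = sum_col_degrees M" unfolding sum_col_degrees_def m ..
  finally show ?thesis .
qed

end


theorem theorem5p8:
  fixes k :: nat and t :: "nat \<Rightarrow> nat" and A Eh :: "nat \<Rightarrow> complex mat"
  assumes "k \<ge> 2"
    and "\<forall>i < k - 1. t (Suc i) \<le> t i"
    and "\<forall>i < k - 1. A i \<in> carrier_mat (t (Suc i)) (t (Suc i))
                       \<and> invertible_mat (A i) \<and> upper_triangular (A i)"
    and "\<forall>i < k - 1. Eh i \<in> carrier_mat (t (Suc i)) (t (Suc i))
                       \<and> invertible_mat (Eh i) \<and> upper_triangular (Eh i)"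
  shows "let P = pencil (A_eps k t A) (E_eps k t Eh); N = N_mat k t A Eh
         in dim_col P = (\<Sum>i<k. t i)
            \<and> dim_row N = dim_col P \<and> dim_col N = dim_col P - normal_rank P
            \<and> minimal_poly_basis P N"
proof -
  interpret bpc k t A Eh by (rule bpc.intro) (use assms in auto)
  have TTk: "TT k = t 0 + RR (k - 1)" using TT_Suc[of "k - 1"] k2 by simp
  have 1: "dim_col PP = (\<Sum>i<k. t i)" using P_dims(1) unfolding TT_def .
  have 2: "dim_row NN = dim_col PP" using N_carr P_dims by simp
  have 3: "dim_col NN = dim_col PP - normal_rank PP" using N_carr P_dims rank_P TTk by simp
  have 4: "minimal_poly_basis PP NN" unfolding minimal_poly_basis_def using basis minimal by blast
  show ?thesis unfolding Let_def using 1 2 3 4 by blast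
qed

end
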